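(* As $\alpha$ ranges over all edge weight systems $\alpha\in\mathcal W(\tau_\lambda;\mathbb Z)$, the elements $Z_\alpha=[Z_1^{\alpha_1}Z_2^{\alpha_2}\cdots Z_n^{\alpha_n}]$ form a basis of the complex vector space $\mathcal Z^\omega(\lambda)$.
   Context: $S$ is a closed oriented surface $\bar S$ of genus $g$ minus $s\ge1$ points $v_1,\dots,v_s$, with $2-2g-s<0$; $\lambda$ is an ideal triangulation (a triangulation of $\bar S$ with vertex set exactly $\{v_1,\dots,v_s\}$) with edges $\lambda_1,\dots,\lambda_n$, $n=6g+3s-6$. Let $a_{ij}\in\{0,1,2\}$ be the number of times an end of $\lambda_j$ immediately succeeds an end of $\lambda_i$ when going counterclockwise around a puncture, $\sigma_{ij}=a_{ij}-a_{ji}$. For $\omega\in\mathbb C-\{0\}$, $\mathcal T^\omega(\lambda)$ is the algebra with generators $Z_i^{\pm1}$ and relations $Z_iZ_j=\omega^{2\sigma_{ij}}Z_jZ_i$. Weyl ordering: $[Z_{i_1}^{n_1}\cdots Z_{i_l}^{n_l}]=\omega^{-\sum_{u<v}n_un_v\sigma_{i_ui_v}}Z_{i_1}^{n_1}\cdots Z_{i_l}^{n_l}$. A monomial $Z_1^{k_1}\cdots Z_n^{k_n}$ is balanced if for every face of $\lambda$ with sides $\lambda_{i_1},\lambda_{i_2},\lambda_{i_3}$ the sum $k_{i_1}+k_{i_2}+k_{i_3}$ is even; the balanced Chekhov–Fock algebra $\mathcal Z^\omega(\lambda)$ is the subalgebra of $\mathcal T^\omega(\lambda)$ generated by balanced monomials.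 Train track $\tau_\lambda$: in each face of $\lambda$, $\tau_\lambda$ consists of three arcs, each joining two sides of the face and turning around the corner between them; these arcs meet each edge $\lambda_i$ at a single switch, so that $\tau_\lambda$ has one switch per edge of $\lambda$ and three edges per face. $\mathcal W(\tau_\lambda;\mathbb Z)$ is the group of assignments of an integer to each edge of $\tau_\lambda$ such that at each switch the sum of the weights of edges incoming on one side equals the sum on the other side. For $\alpha\in\mathcal W(\tau_\lambda;\mathbb Z)$, $\alpha_i$ denotes the sum of the weights of the edges of $\tau_\lambda$ on one side of the switch on $\lambda_i$, and $Z_\alpha=[Z_1^{\alpha_1}\cdots Z_n^{\alpha_n}]$. *)

theory Defs
  imports Complex_Main "HOL-Library.Function_Algebras"
begin

text \<open>Edges are 0..<n, faces 0..<m.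
  side f a (a < 3) is the edge forming the a-th side of face f, the sides being
  listed in counterclockwise order around the face.  Gluing the faces along
  equally labelled sides (orientation reversingly) gives the surface.\<close>

definition face_sides :: "nat \<Rightarrow> (nat \<Rightarrow> nat \<Rightarrow> nat) \<Rightarrow> nat \<Rightarrow> (nat \<times> nat) set" where
  "face_sides m side i = {(f, a). f < m \<and> a < 3 \<and> side f a = i}"

definition face_adj :: "nat \<Rightarrow> (nat \<Rightarrow> nat \<Rightarrow> nat) \<Rightarrow> (nat \<times> nat) set" where
  "face_adj m side = {(f, f'). f < m \<and> f' < m \<and> (\<exists>a<3. \<exists>a'<3. side f a = side f' a')}"

definition ideal_triangulation :: "nat \<Rightarrow> nat \<Rightarrow> (nat \<Rightarrow> nat \<Rightarrow> nat) \<Rightarrow> bool" where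
  "ideal_triangulation n m side \<longleftrightarrow>
     0 < n \<and>
     (\<forall>f<m. \<forall>a<3. side f a < n) \<and>
     (\<forall>i<n. card (face_sides m side i) = 2) \<and>
     (\<forall>f<m. \<forall>f'<m. (f, f') \<in> (face_adj m side)\<^sup>*)"

text \<open>a_ij: number of corners at which an end of edge j immediately succeeds an end
  of edge i going counterclockwise around the puncture.  At the corner of face f
  between sides a and a+1, going counterclockwise around the vertex one passes
  from side a+1 to side a.\<close>

definition a_mat :: "nat \<Rightarrow> (nat \<Rightarrow> nat \<Rightarrow> nat) \<Rightarrow> nat \<Rightarrow> nat \<Rightarrow> nat" where
  "a_mat m side i j = card {(f, a). f < m \<and> a < 3 \<and> side f ((a + 1) mod 3) = i \<and> side f a = j}"

definition sigma :: "nat \<Rightarrow> (nat \<Rightarrow> nat \<Rightarrow> nat) \<Rightarrow> nat \<Rightarrow> nat \<Rightarrow> int" where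
  "sigma m side i j = int (a_mat m side i j) - int (a_mat m side j i)"

text \<open>Chekhov--Fock algebra T^omega(lambda), realised in its standard normal form:
  an element is a finitely supported complex function on exponent vectors
  k :: nat => int (with k i = 0 for i >= n); the function mono k is the ordered
  monomial Z_0^(k 0) ... Z_(n-1)^(k (n-1)).  The product is determined by the
  relations Z_i Z_j = omega^(2 sigma_ij) Z_j Z_i.\<close>

definition expvecs :: "nat \<Rightarrow> (nat \<Rightarrow> int) set" where
  "expvecs n = {k. \<forall>i\<ge>n. k i = 0}"

definition mono :: "(nat \<Rightarrow> int) \<Rightarrow> (nat \<Rightarrow> int) \<Rightarrow> complex" where
  "mono k = (\<lambda>x. if x = k then 1 else 0)"

definition qt_mult :: "nat \<Rightarrow> (nat \<Rightarrow> nat \<Rightarrow> int) \<Rightarrow> complex \<Rightarrow>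
    ((nat \<Rightarrow> int) \<Rightarrow> complex) \<Rightarrow> ((nat \<Rightarrow> int) \<Rightarrow> complex) \<Rightarrow> ((nat \<Rightarrow> int) \<Rightarrow> complex)" where
  "qt_mult n \<sigma> \<omega> p q = (\<lambda>x. \<Sum>(k, l) \<in> {(k, l). p k \<noteq> 0 \<and> q l \<noteq> 0 \<and> k + l = x}.
      p k * q l * \<omega> powi (2 * (\<Sum>i<n. \<Sum>j<i. k i * l j * \<sigma> i j)))"

definition cscale :: "complex \<Rightarrow> ((nat \<Rightarrow> int) \<Rightarrow> complex) \<Rightarrow> ((nat \<Rightarrow> int) \<Rightarrow> complex)" where
  "cscale c p = (\<lambda>x. c * p x)"

definition weyl :: "nat \<Rightarrow> (nat \<Rightarrow> nat \<Rightarrow> int) \<Rightarrow> complex \<Rightarrow> (nat \<Rightarrow> int) \<Rightarrow> ((nat \<Rightarrow> int) \<Rightarrow> complex)" where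
  "weyl n \<sigma> \<omega> k = cscale (\<omega> powi (- (\<Sum>v<n. \<Sum>u<v. k u * k v * \<sigma> u v))) (mono k)"

definition balanced :: "nat \<Rightarrow> (nat \<Rightarrow> nat \<Rightarrow> nat) \<Rightarrow> (nat \<Rightarrow> int) \<Rightarrow> bool" where
  "balanced m side k \<longleftrightarrow> (\<forall>f<m. even (k (side f 0) + k (side f 1) + k (side f 2)))"

inductive_set bal_alg :: "nat \<Rightarrow> nat \<Rightarrow> (nat \<Rightarrow> nat \<Rightarrow> nat) \<Rightarrow> complex \<Rightarrow> ((nat \<Rightarrow> int) \<Rightarrow> complex) set"
  for n m side \<omega> where
  gen: "k \<in> expvecs n \<Longrightarrow> balanced m side k \<Longrightarrow> mono k \<in> bal_alg n m side \<omega>"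
| add: "p \<in> bal_alg n m side \<omega> \<Longrightarrow> q \<in> bal_alg n m side \<omega> \<Longrightarrow> p + q \<in> bal_alg n m side \<omega>"
| smult: "p \<in> bal_alg n m side \<omega> \<Longrightarrow> cscale c p \<in> bal_alg n m side \<omega>"
| mult: "p \<in> bal_alg n m side \<omega> \<Longrightarrow> q \<in> bal_alg n m side \<omega> \<Longrightarrow>
          qt_mult n (sigma m side) \<omega> p q \<in> bal_alg n m side \<omega>"

text \<open>Train track tau_lambda: its edges are the corners (f, c), f < m, c < 3, the
  arc at corner c of face f joining sides c and (c+1) mod 3.  The arcs of face f
  meeting side a are the corners a and (a+2) mod 3.\<close>

definition side_wt :: "(nat \<Rightarrow> nat \<Rightarrow> int) \<Rightarrow> nat \<Rightarrow> nat \<Rightarrow> int" where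
  "side_wt w f a = w f a + w f ((a + 2) mod 3)"

definition edge_weight_systems :: "nat \<Rightarrow> (nat \<Rightarrow> nat \<Rightarrow> nat) \<Rightarrow> (nat \<Rightarrow> nat \<Rightarrow> int) set" where
  "edge_weight_systems m side = {w.
     (\<forall>f c. (m \<le> f \<or> 3 \<le> c) \<longrightarrow> w f c = 0) \<and>
     (\<forall>f<m. \<forall>a<3. \<forall>f'<m. \<forall>a'<3. side f a = side f' a' \<longrightarrow> side_wt w f a = side_wt w f' a')}"

definition alpha_vec :: "nat \<Rightarrow> nat \<Rightarrow> (nat \<Rightarrow> nat \<Rightarrow> nat) \<Rightarrow> (nat \<Rightarrow> nat \<Rightarrow> int) \<Rightarrow> (nat \<Rightarrow> int)" where
  "alpha_vec n m side w = (\<lambda>i. if i < n then (SOME x. \<exists>f<m. \<exists>a<3. side f a = i \<and> x = side_wt w f a) else 0)"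

definition Z_alpha :: "nat \<Rightarrow> nat \<Rightarrow> (nat \<Rightarrow> nat \<Rightarrow> nat) \<Rightarrow> complex \<Rightarrow> (nat \<Rightarrow> nat \<Rightarrow> int) \<Rightarrow> ((nat \<Rightarrow> int) \<Rightarrow> complex)" where
  "Z_alpha n m side \<omega> w = weyl n (sigma m side) \<omega> (alpha_vec n m side w)"

end

theory Submission
  imports Defs
begin

lemma fsum_apply: "(sum f A) x = (\<Sum>a\<in>A. f a x)" for f :: "'a \<Rightarrow> 'b \<Rightarrow> 'c::comm_monoid_add"
  by (induction A rule: infinite_finite_induct) auto

interpretation M: module cscale
  by standard (auto simp: cscale_def fun_eq_iff algebra_simps)

lemma ews_zero: "w \<in> edge_weight_systems m side \<Longrightarrow> m \<le> f \<or> 3 \<le> c \<Longrightarrow> w f c = 0"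
  unfolding edge_weight_systems_def by blast

lemma ews_cons: "w \<in> edge_weight_systems m side \<Longrightarrow> f < m \<Longrightarrow> a < 3 \<Longrightarrow> f' < m \<Longrightarrow> a' < 3 \<Longrightarrow>
    side f a = side f' a' \<Longrightarrow> side_wt w f a = side_wt w f' a'"
  unfolding edge_weight_systems_def by blast

lemma ewsI: "(\<And>f c. m \<le> f \<or> 3 \<le> c \<Longrightarrow> w f c = 0) \<Longrightarrow>
   (\<And>f a f' a'. f < m \<Longrightarrow> a < 3 \<Longrightarrow> f' < m \<Longrightarrow> a' < 3 \<Longrightarrow> side f a = side f' a' \<Longrightarrow> side_wt w f a = side_wt w f' a')
   \<Longrightarrow> w \<in> edge_weight_systems m side"
  unfolding edge_weight_systems_def mem_Collect_eq by blast

definition Bset :: "nat \<Rightarrow> nat \<Rightarrow> (nat \<Rightarrow> nat \<Rightarrow> nat) \<Rightarrow> ((nat \<Rightarrow> int) \<Rightarrow> complex) set" where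
  "Bset n m side = {p. finite {x. p x \<noteq> 0} \<and> (\<forall>x. p x \<noteq> 0 \<longrightarrow> x \<in> expvecs n \<and> balanced m side x)}"

lemma repr:
  assumes "finite {x. p x \<noteq> 0}"
  shows "p = (\<Sum>x\<in>{x. p x \<noteq> 0}. cscale (p x) (mono x))"
proof
  fix y
  have "(\<Sum>x\<in>{x. p x \<noteq> 0}. cscale (p x) (mono x)) y = (\<Sum>x\<in>{x. p x \<noteq> 0}. if x = y then p x else 0)"
    by (simp add: fsum_apply cscale_def mono_def) (rule sum.cong, auto)
  also have "\<dots> = p y" using assms by (simp add: sum.delta)
  finally show "p y = (\<Sum>x\<in>{x. p x \<noteq> 0}. cscale (p x) (mono x)) y" by simp
qed

lemma weyl_apply: "weyl n \<sigma> \<omega> k x = (if x = k then \<omega> powi (- (\<Sum>v<n. \<Sum>u<v. k u * k v * \<sigma> u v)) else 0)"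
  by (simp add: weyl_def cscale_def mono_def)

context
  fixes n m :: nat and side :: "nat \<Rightarrow> nat \<Rightarrow> nat"
  assumes tri: "ideal_triangulation n m side"
begin

lemma side_lt: "f < m \<Longrightarrow> a < 3 \<Longrightarrow> side f a < n"
  using tri by (auto simp: ideal_triangulation_def)

lemma alpha_side:
  assumes w: "w \<in> edge_weight_systems m side" and f: "f < m" and a: "a < 3"
  shows "alpha_vec n m side w (side f a) = side_wt w f a"
proof -
  define P where "P = (\<lambda>x. \<exists>f'<m. \<exists>a'<3. side f' a' = side f a \<and> x = side_wt w f' a')"
  have ex: "\<exists>x. P x" unfolding P_def
    by (rule exI[of _ "side_wt w f a"]) (use f a in blast)
  define S where "S = (SOME x. P x)"
  have "P S" unfolding S_def using ex by (rule someI_ex)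
  then have "\<exists>f'<m. \<exists>a'<3. side f' a' = side f a \<and> S = side_wt w f' a'" by (simp only: P_def)
  then obtain f' a' where "f' < m" "a' < 3" "side f' a' = side f a"
    and eq: "S = side_wt w f' a'" by blast
  moreover have "side_wt w f' a' = side_wt w f a"
    by (rule ews_cons[OF w]) (use calculation f a in auto)
  ultimately show ?thesis using side_lt[OF f a] unfolding alpha_vec_def P_def[symmetric] S_def[symmetric] by simp
qed

lemma recon:
  assumes w: "w \<in> edge_weight_systems m side" and f: "f < m" and c: "c < 3"
  shows "2 * w f c = alpha_vec n m side w (side f c) + alpha_vec n m side w (side f ((c+1) mod 3))
     - alpha_vec n m side w (side f ((c+2) mod 3))"
proof -
  have "c = 0 \<or> c = 1 \<or> c = 2" using c by auto
  then show ?thesis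
    using alpha_side[OF w f, of 0] alpha_side[OF w f, of 1] alpha_side[OF w f, of 2] by (auto simp: side_wt_def numeral_2_eq_2)
qed

lemma alpha_inj: "inj_on (alpha_vec n m side) (edge_weight_systems m side)"
proof (rule inj_onI)
  fix w w' assume w: "w \<in> edge_weight_systems m side" and w': "w' \<in> edge_weight_systems m side"
    and eq: "alpha_vec n m side w = alpha_vec n m side w'"
  show "w = w'"
  proof (rule ext, rule ext)
    fix f c
    show "w f c = w' f c"
    proof (cases "f < m \<and> c < 3")
      case True
      then have "2 * w f c = 2 * w' f c" using recon[OF w] recon[OF w'] eq by auto
      then show ?thesis by simp
    next
      case False
      then show ?thesis using ews_zero[OF w] ews_zero[OF w'] by auto
    qed
  qed
qed

lemma alpha_exp: "alpha_vec n m side w \<in> expvecs n"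
  by (simp add: expvecs_def alpha_vec_def)

lemma alpha_bal:
  assumes w: "w \<in> edge_weight_systems m side"
  shows "balanced m side (alpha_vec n m side w)"
  unfolding balanced_def
proof (intro allI impI)
  fix f assume f: "f < m"
  have "alpha_vec n m side w (side f 0) + alpha_vec n m side w (side f 1) + alpha_vec n m side w (side f 2)
     = 2 * (w f 0 + w f 1 + w f 2)"
    using alpha_side[OF w f, of 0] alpha_side[OF w f, of 1] alpha_side[OF w f, of 2] by (simp add: side_wt_def numeral_2_eq_2)
  then show "even (alpha_vec n m side w (side f 0) + alpha_vec n m side w (side f 1) + alpha_vec n m side w (side f 2))"
    by simp
qed

lemma alpha_surj:
  assumes k: "k \<in> expvecs n" and b: "balanced m side k"
  shows "\<exists>w\<in>edge_weight_systems m side. alpha_vec n m side w = k"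
proof -
  define w where "w = (\<lambda>f c. if f < m \<and> c < 3 then
       (k (side f c) + k (side f ((c+1) mod 3)) - k (side f ((c+2) mod 3))) div 2 else 0)"
  have ev: "even (k (side f 0) + k (side f 1) + k (side f 2))" if "f < m" for f
    using b that by (simp add: balanced_def)
  have sw: "side_wt w f a = k (side f a)" if f: "f < m" and a: "a < 3" for f a
  proof -
    obtain q where q: "k (side f 0) + k (side f 1) + k (side f 2) = 2 * q" using ev[OF f] by blast
    have "a = 0 \<or> a = 1 \<or> a = 2" using a by auto
    have ar: "\<And>x y z. x + y + z = 2 * q \<Longrightarrow> (x + y - z) div 2 + (z + x - y) div 2 = x" for q :: int
      by presburger
    have ar2: "\<And>x y z. x + y + z = 2 * q \<Longrightarrow> (y + z - x) div 2 + (x + y - z) div 2 = y" for q :: int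
      by presburger
    have ar3: "\<And>x y z. x + y + z = 2 * q \<Longrightarrow> (z + x - y) div 2 + (y + z - x) div 2 = z" for q :: int
      by presburger
    from \<open>a = 0 \<or> a = 1 \<or> a = 2\<close> show ?thesis using f q
      by (auto simp: side_wt_def w_def numeral_2_eq_2 intro: ar ar2 ar3)
  qed
  have wE: "w \<in> edge_weight_systems m side"
  proof (rule ewsI)
    fix f c :: nat assume "m \<le> f \<or> 3 \<le> c" then show "w f c = 0" by (auto simp: w_def)
  next
    fix f a f' a' assume "f < m" "a < 3" "f' < m" "a' < 3" "side f a = side f' a'"
    then show "side_wt w f a = side_wt w f' a'" using sw by metis
  qed
  have "alpha_vec n m side w = k"
  proof
    fix i
    show "alpha_vec n m side w i = k i"
    proof (cases "i < n")
      case True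
      then have "card (face_sides m side i) = 2" using tri by (auto simp: ideal_triangulation_def)
      then have "face_sides m side i \<noteq> {}" by auto
      then obtain f a where "f < m" "a < 3" "side f a = i" by (auto simp: face_sides_def)
      then show ?thesis using alpha_side[OF wE] sw by metis
    next
      case False
      then show ?thesis using k by (simp add: alpha_vec_def expvecs_def)
    qed
  qed
  then show ?thesis using wE by blast
qed


lemma supp_weyl: "{x. weyl n \<sigma> \<omega> k x \<noteq> 0} \<subseteq> {k}"
  by (auto simp: weyl_apply split: if_splits)

lemma Z_in_B:
  assumes w: "w \<in> edge_weight_systems m side"
  shows "Z_alpha n m side \<omega> w \<in> Bset n m side"
proof -
  have s: "{x. Z_alpha n m side \<omega> w x \<noteq> 0} \<subseteq> {alpha_vec n m side w}"
    unfolding Z_alpha_def by (rule supp_weyl)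
  then show ?thesis
    using alpha_exp alpha_bal[OF w] finite_subset[OF s]
    by (auto simp: Bset_def)
qed

lemma B_subspace: "M.subspace (Bset n m side)"
proof (rule M.subspaceI)
  show "0 \<in> Bset n m side" by (simp add: Bset_def)
next
  fix x y assume x: "x \<in> Bset n m side" and y: "y \<in> Bset n m side"
  have "{z. (x + y) z \<noteq> 0} \<subseteq> {z. x z \<noteq> 0} \<union> {z. y z \<noteq> 0}" by auto
  then show "x + y \<in> Bset n m side" using x y
    by (auto simp: Bset_def intro: finite_subset)
next
  fix c x assume x: "x \<in> Bset n m side"
  have "{z. cscale c x z \<noteq> 0} \<subseteq> {z. x z \<noteq> 0}" by (auto simp: cscale_def)
  then show "cscale c x \<in> Bset n m side" using x
    by (auto simp: Bset_def cscale_def intro: finite_subset)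
qed

lemma span_sub_B: "M.span (Z_alpha n m side \<omega> ` edge_weight_systems m side) \<subseteq> Bset n m side"
  by (rule M.span_minimal) (use Z_in_B B_subspace in auto)

lemma mono_in_span:
  assumes om: "\<omega> \<noteq> 0" and k: "k \<in> expvecs n" and b: "balanced m side k"
  shows "mono k \<in> M.span (Z_alpha n m side \<omega> ` edge_weight_systems m side)"
proof -
  obtain w where w: "w \<in> edge_weight_systems m side" and wk: "alpha_vec n m side w = k"
    using alpha_surj[OF k b] by blast
  define c where "c = \<omega> powi (- (\<Sum>v<n. \<Sum>u<v. k u * k v * sigma m side u v))"
  have c0: "c \<noteq> 0" using om by (simp add: c_def)
  have Z: "Z_alpha n m side \<omega> w = cscale c (mono k)"
    by (simp add: Z_alpha_def weyl_def wk c_def)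
  have "mono k = cscale (inverse c) (Z_alpha n m side \<omega> w)"
    using c0 by (simp add: Z cscale_def fun_eq_iff)
  also have "\<dots> \<in> M.span (Z_alpha n m side \<omega> ` edge_weight_systems m side)"
    by (rule M.span_scale, rule M.span_base) (use w in auto)
  finally show ?thesis .
qed

lemma B_sub_span:
  assumes om: "\<omega> \<noteq> 0"
  shows "Bset n m side \<subseteq> M.span (Z_alpha n m side \<omega> ` edge_weight_systems m side)"
proof
  fix p assume p: "p \<in> Bset n m side"
  then have fin: "finite {x. p x \<noteq> 0}" by (simp add: Bset_def)
  have "(\<Sum>x\<in>{x. p x \<noteq> 0}. cscale (p x) (mono x)) \<in> M.span (Z_alpha n m side \<omega> ` edge_weight_systems m side)"
    by (rule M.span_sum, rule M.span_scale, rule mono_in_span[OF om]) (use p in \<open>auto simp: Bset_def\<close>)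
  moreover have "(\<Sum>x\<in>{x. p x \<noteq> 0}. cscale (p x) (mono x)) = p" by (rule repr[OF fin, symmetric])
  ultimately show "p \<in> M.span (Z_alpha n m side \<omega> ` edge_weight_systems m side)"
    by (rule back_subst)
qed

lemma bal_sub_B: "p \<in> bal_alg n m side \<omega> \<Longrightarrow> p \<in> Bset n m side"
proof (induction rule: bal_alg.induct)
  case (gen k)
  have "{x. mono k x \<noteq> 0} = {k}" by (auto simp: mono_def)
  then show ?case using gen by (auto simp: Bset_def mono_def)
next
  case (add p q)
  then show ?case using B_subspace unfolding M.subspace_def by blast
next
  case (smult p c)
  then show ?case using B_subspace unfolding M.subspace_def by blast
next
  case (mult p q)
  let ?P = "{x. p x \<noteq> 0}" and ?Q = "{x. q x \<noteq> 0}"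
  have sub: "{x. qt_mult n (sigma m side) \<omega> p q x \<noteq> 0} \<subseteq> (\<lambda>(k, l). k + l) ` (?P \<times> ?Q)"
  proof
    fix x assume "x \<in> {x. qt_mult n (sigma m side) \<omega> p q x \<noteq> 0}"
    then have nz: "qt_mult n (sigma m side) \<omega> p q x \<noteq> 0" by simp
    have "{(k, l). p k \<noteq> 0 \<and> q l \<noteq> 0 \<and> k + l = x} \<noteq> {}"
    proof
      assume e: "{(k, l). p k \<noteq> 0 \<and> q l \<noteq> 0 \<and> k + l = x} = {}"
      have "qt_mult n (sigma m side) \<omega> p q x = 0" unfolding qt_mult_def e by simp
      then show False using nz by simp
    qed
    then show "x \<in> (\<lambda>(k, l). k + l) ` (?P \<times> ?Q)" by auto
  qed
  have fin: "finite ((\<lambda>(k, l). k + l) ` (?P \<times> ?Q))"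
    using mult.IH by (auto simp: Bset_def)
  have "x \<in> expvecs n \<and> balanced m side x" if xin: "x \<in> (\<lambda>(k, l). k + l) ` (?P \<times> ?Q)" for x
  proof -
    obtain k l where kl: "x = k + l" "p k \<noteq> 0" "q l \<noteq> 0" using xin by auto
    then have "k \<in> expvecs n" "balanced m side k" "l \<in> expvecs n" "balanced m side l"
      using mult.IH by (auto simp: Bset_def)
    then show ?thesis using kl
      by (auto simp: expvecs_def balanced_def algebra_simps)
  qed
  then show ?case using sub finite_subset[OF sub fin] unfolding Bset_def mem_Collect_eq by blast
qed

lemma zero_bal: "0 \<in> bal_alg n m side \<omega>"
proof -
  have "mono 0 \<in> bal_alg n m side \<omega>"
    by (rule bal_alg.gen) (auto simp: expvecs_def balanced_def)
  then have "cscale 0 (mono 0) \<in> bal_alg n m side \<omega>" by (rule bal_alg.smult)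
  then show ?thesis by (simp add: cscale_def zero_fun_def)
qed

lemma B_sub_bal: "Bset n m side \<subseteq> bal_alg n m side \<omega>"
proof
  fix p assume p: "p \<in> Bset n m side"
  then have fin: "finite {x. p x \<noteq> 0}" by (simp add: Bset_def)
  have "\<And>A. A \<subseteq> {x. p x \<noteq> 0} \<Longrightarrow> (\<Sum>x\<in>A. cscale (p x) (mono x)) \<in> bal_alg n m side \<omega>"
  proof -
    fix A assume As: "A \<subseteq> {x. p x \<noteq> 0}"
    have "finite A" using As fin finite_subset by blast
    from this As show "(\<Sum>x\<in>A. cscale (p x) (mono x)) \<in> bal_alg n m side \<omega>"
    proof (induction A rule: finite_induct)
      case empty then show ?case using zero_bal by (simp only: sum.empty)
    next
      case (insert a A)
      have "mono a \<in> bal_alg n m side \<omega>"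
        using insert.prems p by (intro bal_alg.gen) (auto simp: Bset_def)
      then have "cscale (p a) (mono a) \<in> bal_alg n m side \<omega>" by (rule bal_alg.smult)
      moreover have "(\<Sum>x\<in>A. cscale (p x) (mono x)) \<in> bal_alg n m side \<omega>"
        using insert.IH insert.prems by blast
      ultimately have "cscale (p a) (mono a) + (\<Sum>x\<in>A. cscale (p x) (mono x)) \<in> bal_alg n m side \<omega>"
        by (rule bal_alg.add)
      then show ?case unfolding sum.insert[OF insert.hyps(1,2)] .
    qed
  qed
  then have "(\<Sum>x\<in>{x. p x \<noteq> 0}. cscale (p x) (mono x)) \<in> bal_alg n m side \<omega>" by blast
  moreover have "(\<Sum>x\<in>{x. p x \<noteq> 0}. cscale (p x) (mono x)) = p" by (rule repr[OF fin, symmetric])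
  ultimately show "p \<in> bal_alg n m side \<omega>" by (rule back_subst)
qed

end


lemma Z_val:
  assumes om: "\<omega> \<noteq> 0"
  shows "Z_alpha n m side \<omega> w (alpha_vec n m side w) \<noteq> 0"
  using om by (simp add: Z_alpha_def weyl_apply)

lemma Z_val2: "Z_alpha n m side \<omega> w x \<noteq> 0 \<Longrightarrow> x = alpha_vec n m side w"
  by (simp add: Z_alpha_def weyl_apply split: if_splits)

theorem lemma3p1:
  fixes n m :: nat and side :: "nat \<Rightarrow> nat \<Rightarrow> nat" and \<omega> :: complex
  assumes "ideal_triangulation n m side"
    and "\<omega> \<noteq> 0"
  shows "inj_on (Z_alpha n m side \<omega>) (edge_weight_systems m side)
    \<and> \<not> module.dependent cscale (Z_alpha n m side \<omega> ` edge_weight_systems m side)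
    \<and> module.span cscale (Z_alpha n m side \<omega> ` edge_weight_systems m side) = bal_alg n m side \<omega>"
proof (intro conjI)
  note tri = assms(1) and om = assms(2)
  show "inj_on (Z_alpha n m side \<omega>) (edge_weight_systems m side)"
  proof (rule inj_onI)
    fix w w' assume w: "w \<in> edge_weight_systems m side" and w': "w' \<in> edge_weight_systems m side"
      and eq: "Z_alpha n m side \<omega> w = Z_alpha n m side \<omega> w'"
    have "Z_alpha n m side \<omega> w' (alpha_vec n m side w) \<noteq> 0" using Z_val[OF om, of n m side w] eq by simp
    then have "alpha_vec n m side w = alpha_vec n m side w'" by (rule Z_val2)
    then show "w = w'" using alpha_inj[OF tri] w w' by (auto dest: inj_onD)
  qed
  show "\<not> M.dependent (Z_alpha n m side \<omega> ` edge_weight_systems m side)"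
  proof
    assume "M.dependent (Z_alpha n m side \<omega> ` edge_weight_systems m side)"
    then obtain t u v0 where fin: "finite t" and tsub: "t \<subseteq> Z_alpha n m side \<omega> ` edge_weight_systems m side"
      and s0: "(\<Sum>v\<in>t. cscale (u v) v) = 0" and v0: "v0 \<in> t" and uv0: "u v0 \<noteq> 0"
      unfolding M.dependent_explicit by blast
    obtain w0 where v0w: "v0 = Z_alpha n m side \<omega> w0" using v0 tsub by blast
    define k0 where "k0 = alpha_vec n m side w0"
    have "(\<Sum>v\<in>t. cscale (u v) v) k0 = 0" using s0 by simp
    then have "(\<Sum>v\<in>t. u v * v k0) = 0" by (simp add: fsum_apply cscale_def)
    moreover have "(\<Sum>v\<in>t. u v * v k0) = u v0 * v0 k0"
    proof -
      have rest: "sum (\<lambda>v. u v * v k0) (t - {v0}) = 0"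
      proof (rule sum.neutral, rule ballI)
        fix v assume v: "v \<in> t - {v0}"
        then obtain w where vw: "v = Z_alpha n m side \<omega> w" using tsub by blast
        show "u v * v k0 = 0"
        proof (rule ccontr)
          assume "u v * v k0 \<noteq> 0"
          then have "v k0 \<noteq> 0" by simp
          then have "k0 = alpha_vec n m side w" using vw Z_val2 by blast
          then have "v = v0" using vw v0w k0_def by (simp add: Z_alpha_def)
          then show False using v by simp
        qed
      qed
      show ?thesis using sum.remove[OF fin v0, of "\<lambda>v. u v * v k0"] rest by simp
    qed
    ultimately have "u v0 * v0 k0 = 0" by simp
    moreover have "v0 k0 \<noteq> 0" using v0w k0_def Z_val[OF om] by simp
    ultimately show False using uv0 by simp
  qed
  show "M.span (Z_alpha n m side \<omega> ` edge_weight_systems m side) = bal_alg n m side \<omega>"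
    using span_sub_B[OF tri] B_sub_span[OF tri om] bal_sub_B[OF tri] B_sub_bal[OF tri] by blast
qed

end
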